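(* Let $G$ be a graph that has a vertex $v$ such that $G-v$ is acyclic. Then for every $k\ge 2$ and every $r\ge 3$, $R_r(\mathcal{B}(G),k)\le 4k|V(G)|+r-2$.
   Context: For a graph $G$, a hypergraph $H$ is a Berge-$G$ hypergraph if there are an injective map $\phi:V(G)\to V(H)$ and pairwise distinct hyperedges $e_{xy}\in E(H)$, one for each $xy\in E(G)$, with $\phi(x),\phi(y)\in e_{xy}$. $\mathcal{B}(G)$ denotes the family of all Berge-$G$ hypergraphs. For a family $\mathcal{H}$ of $r$-uniform hypergraphs, $R_r(\mathcal{H},k)$ is the smallest $n$ such that every $k$-coloring of the hyperedges of the complete $r$-uniform hypergraph $K_n^r$ contains a monochromatic subhypergraph belonging to $\mathcal{H}$. *)

theory Defs
  imports Main
begin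

definition simple_graph :: "'a set \<Rightarrow> 'a set set \<Rightarrow> bool" where
  "simple_graph V E \<longleftrightarrow> finite V \<and> (\<forall>e\<in>E. e \<subseteq> V \<and> card e = 2)"

definition has_cycle :: "'a set \<Rightarrow> 'a set set \<Rightarrow> bool" where
  "has_cycle V E \<longleftrightarrow> (\<exists>xs. length xs \<ge> 3 \<and> distinct xs \<and> set xs \<subseteq> V \<and>
      (\<forall>i<length xs. {xs ! i, xs ! ((i + 1) mod length xs)} \<in> E))"

definition acyclic_graph :: "'a set \<Rightarrow> 'a set set \<Rightarrow> bool" where
  "acyclic_graph V E \<longleftrightarrow> \<not> has_cycle V E"

definition del_vertex_V :: "'a set \<Rightarrow> 'a \<Rightarrow> 'a set" where
  "del_vertex_V V v = V - {v}"

definition del_vertex_E :: "'a set set \<Rightarrow> 'a \<Rightarrow> 'a set set" where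
  "del_vertex_E E v = {e \<in> E. v \<notin> e}"

text \<open>The hypergraph (W, H) contains a Berge copy of the graph (V, E):
  an injection phi of V into W and pairwise distinct hyperedges f e, one per edge e,
  with phi(e) contained in f e.  (The hyperedges f ` E then form a Berge-G subhypergraph.)\<close>
definition contains_berge :: "'a set \<Rightarrow> 'a set set \<Rightarrow> 'b set \<Rightarrow> 'b set set \<Rightarrow> bool" where
  "contains_berge V E W H \<longleftrightarrow> (\<exists>phi f. inj_on phi V \<and> phi ` V \<subseteq> W \<and>
      inj_on f E \<and> f ` E \<subseteq> H \<and> (\<forall>e\<in>E. phi ` e \<subseteq> f e))"

definition berge_arrows :: "nat \<Rightarrow> nat \<Rightarrow> 'a set \<Rightarrow> 'a set set \<Rightarrow> nat \<Rightarrow> bool" where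
  "berge_arrows r k V E n \<longleftrightarrow>
     (\<forall>c :: nat set \<Rightarrow> nat. (\<forall>e. e \<subseteq> {..<n} \<and> card e = r \<longrightarrow> c e < k) \<longrightarrow>
        (\<exists>i<k. contains_berge V E {..<n} {e. e \<subseteq> {..<n} \<and> card e = r \<and> c e = i}))"

definition berge_ramsey :: "nat \<Rightarrow> 'a set \<Rightarrow> 'a set set \<Rightarrow> nat \<Rightarrow> nat" where
  "berge_ramsey r V E k = (LEAST n. berge_arrows r k V E n)"

end

theory Submission
  imports Defs
begin


definition is_path :: "'a set set \<Rightarrow> 'a set \<Rightarrow> 'a list \<Rightarrow> bool" where
  "is_path EF U xs \<longleftrightarrow> xs \<noteq> [] \<and> distinct xs \<and> set xs \<subseteq> U \<and>
     (\<forall>i. Suc i < length xs \<longrightarrow> {xs!i, xs!Suc i} \<in> EF)"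

lemma leaf:
  assumes fin: "finite U" and ne: "U \<noteq> {}" and edges: "\<forall>e\<in>EF. e \<subseteq> U \<and> card e = 2"
    and nc: "\<not> has_cycle U EF"
  shows "\<exists>u\<in>U. \<forall>a b. {u,a}\<in>EF \<longrightarrow> {u,b}\<in>EF \<longrightarrow> a = b"
proof (rule ccontr)
  assume "\<not> ?thesis"
  hence deg2: "\<forall>u\<in>U. \<exists>a b. {u,a}\<in>EF \<and> {u,b}\<in>EF \<and> a \<noteq> b" by blast
  obtain u0 where "u0 \<in> U" using ne by blast
  hence p0: "is_path EF U [u0]" by (simp add: is_path_def)
  have bnd: "\<forall>ys. is_path EF U ys \<longrightarrow> length ys < Suc (card U)"
  proof (intro allI impI)
    fix ys assume "is_path EF U ys"
    hence "distinct ys" "set ys \<subseteq> U" by (auto simp: is_path_def)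
    hence "length ys \<le> card U" using fin by (metis card_mono distinct_card)
    thus "length ys < Suc (card U)" by simp
  qed
  obtain xs where xs: "is_path EF U xs" and mx: "\<forall>ys. is_path EF U ys \<longrightarrow> length ys \<le> length xs"
    using Lattices_Big.ex_has_greatest_nat[of "is_path EF U" "[u0]" length "Suc (card U)", OF p0 bnd] by blast
  define y where "y = last xs"
  have xsne: "xs \<noteq> []" and dxs: "distinct xs" and sxs: "set xs \<subseteq> U"
    and exs: "\<forall>i. Suc i < length xs \<longrightarrow> {xs!i, xs!Suc i} \<in> EF" using xs by (auto simp: is_path_def)
  have yU: "y \<in> U" using y_def xsne sxs by auto
  have ylast: "xs ! (length xs - 1) = y" using y_def xsne by (simp add: last_conv_nth)
  obtain a b where ab: "{y,a}\<in>EF" "{y,b}\<in>EF" "a \<noteq> b" using deg2 yU by blast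
  obtain z where z: "{y,z} \<in> EF" and zp: "length xs \<ge> 2 \<longrightarrow> z \<noteq> xs ! (length xs - 2)"
    using ab by metis
  have zy: "z \<noteq> y" using z edges by (metis card_1_singleton_iff insert_absorb2 numeral_One numeral_eq_iff semiring_norm(85) card.empty card_insert_disjoint finite.emptyI insert_not_empty One_nat_def Suc_1 card_Suc_eq n_not_Suc_n)
  have zU: "z \<in> U" using z edges by auto
  show False
  proof (cases "z \<in> set xs")
    case False
    have "is_path EF U (xs @ [z])"
      unfolding is_path_def
    proof (intro conjI allI impI)
      show "xs @ [z] \<noteq> []" by simp
      show "distinct (xs @ [z])" using dxs False by simp
      show "set (xs @ [z]) \<subseteq> U" using sxs zU by simp
      fix i assume i: "Suc i < length (xs @ [z])"
      show "{(xs @ [z]) ! i, (xs @ [z]) ! Suc i} \<in> EF"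
      proof (cases "Suc i < length xs")
        case True thus ?thesis using exs by (simp add: nth_append)
      next
        case False
        hence "i = length xs - 1" "Suc i = length xs" using i by auto
        thus ?thesis using ylast z xsne by (simp add: nth_append)
      qed
    qed
    thus False using mx by fastforce
  next
    case True
    then obtain j where j: "j < length xs" "xs ! j = z" by (auto simp: in_set_conv_nth)
    have "j \<noteq> length xs - 1" using j ylast zy by auto
    moreover have "j \<noteq> length xs - 2" using j zp zy ylast
      by (metis diff_is_0_eq' le_less_linear less_2_cases diff_diff_cancel Suc_1 One_nat_def diff_Suc_1 diff_zero less_Suc_eq_0_disj nat_neq_iff)
    ultimately have j3: "j + 3 \<le> length xs" using j by linarith
    define ys where "ys = drop j xs"
    have lys: "length ys = length xs - j" by (simp add: ys_def)
    have "has_cycle U EF"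
      unfolding has_cycle_def
    proof (intro exI conjI allI impI)
      show "3 \<le> length ys" using lys j3 by simp
      show "distinct ys" using dxs by (simp add: ys_def)
      show "set ys \<subseteq> U" using sxs set_drop_subset ys_def by fastforce
      fix i assume i: "i < length ys"
      show "{ys ! i, ys ! ((i + 1) mod length ys)} \<in> EF"
      proof (cases "Suc i < length ys")
        case True
        hence "(i+1) mod length ys = Suc i" by simp
        moreover have "Suc (j+i) < length xs" using True lys by simp
        ultimately show ?thesis using exs[rule_format, of "j+i"] True by (simp add: ys_def)
      next
        case False
        hence "i = length ys - 1" using i by simp
        hence "i + 1 = length ys" using i by simp
        hence "(i+1) mod length ys = 0" by simp
        moreover have "ys ! i = y" using \<open>i = length ys - 1\<close> lys j ylast by (simp add: ys_def)
        moreover have "ys ! 0 = z" using j by (simp add: ys_def)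
        ultimately show ?thesis using z by (simp add: insert_commute)
      qed
    qed
    thus False using nc by simp
  qed
qed

lemma has_cycle_mono: "has_cycle U' EF' \<Longrightarrow> U' \<subseteq> U \<Longrightarrow> EF' \<subseteq> EF \<Longrightarrow> has_cycle U EF"
  unfolding has_cycle_def by blast

lemma card2_neq: "card {a, b} = 2 \<Longrightarrow> a \<noteq> b"
  by (cases "a = b") auto

lemma embed_forest:
  assumes "finite U" and "\<forall>e\<in>EF. e \<subseteq> U \<and> card e = 2" and "\<not> has_cycle U EF"
    and "finite D" and "D \<noteq> {}" and "\<forall>y\<in>D. card {z\<in>D. L y z} \<ge> card U"
    and sym: "\<forall>y z. L y z \<longrightarrow> L z y"
  shows "\<exists>\<phi>. inj_on \<phi> U \<and> \<phi> ` U \<subseteq> D \<and> (\<forall>a b. {a,b}\<in>EF \<longrightarrow> L (\<phi> a) (\<phi> b))"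
  using assms(1-3,6)
proof (induction "card U" arbitrary: U EF)
  case 0
  hence "U = {}" using \<open>finite U\<close> by simp
  hence "EF = {}" using 0 by fastforce
  thus ?case using \<open>U = {}\<close> by simp
next
  case (Suc m)
  have Une: "U \<noteq> {}" using Suc.hyps(2) by auto
  obtain u where uU: "u \<in> U" and lf: "\<forall>a b. {u,a}\<in>EF \<longrightarrow> {u,b}\<in>EF \<longrightarrow> a = b"
    using leaf[OF Suc.prems(1) Une Suc.prems(2,3)] by blast
  define U' where "U' = U - {u}"
  define EF' where "EF' = {e\<in>EF. u \<notin> e}"
  have cU': "m = card U'" using Suc.hyps(2) uU Suc.prems(1) by (simp add: U'_def)
  have e': "\<forall>e\<in>EF'. e \<subseteq> U' \<and> card e = 2" using Suc.prems(2) by (auto simp: EF'_def U'_def)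
  have nc': "\<not> has_cycle U' EF'" using Suc.prems(3) has_cycle_mono[of U' EF' U EF]
    by (auto simp: EF'_def U'_def)
  have dg: "\<forall>y\<in>D. card {z\<in>D. L y z} \<ge> card U'" using Suc.prems(4) cU' Suc.hyps(2) by force
  obtain \<phi> where ph: "inj_on \<phi> U'" "\<phi> ` U' \<subseteq> D" "\<forall>a b. {a,b}\<in>EF' \<longrightarrow> L (\<phi> a) (\<phi> b)"
    using Suc.hyps(1)[OF cU' _ e' nc' dg] Suc.prems(1) U'_def by blast
  have cim: "card (\<phi> ` U') \<le> m" using cU' card_image_le Suc.prems(1) U'_def by (metis finite_Diff)
  have fim: "finite (\<phi> ` U')" using Suc.prems(1) U'_def by simp
  obtain z where z: "z \<in> D" "z \<notin> \<phi> ` U'" "\<forall>w. {u,w}\<in>EF \<longrightarrow> L (\<phi> w) z"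
  proof (cases "\<exists>w. {u,w}\<in>EF")
    case True
    then obtain w where w: "{u,w}\<in>EF" by blast
    have "card {u,w} = 2" using w Suc.prems(2) by blast
    hence "w \<noteq> u" using card2_neq by metis
    hence wU': "w \<in> U'" using w Suc.prems(2) by (auto simp: U'_def)
    hence "\<phi> w \<in> D" using ph by auto
    hence cg: "card {z\<in>D. L (\<phi> w) z} \<ge> Suc m" using Suc.prems(4) Suc.hyps(2) by simp
    have "\<not> {z\<in>D. L (\<phi> w) z} \<subseteq> \<phi> ` U'"
    proof
      assume "{z\<in>D. L (\<phi> w) z} \<subseteq> \<phi> ` U'"
      hence "card {z\<in>D. L (\<phi> w) z} \<le> card (\<phi> ` U')" using fim card_mono by blast
      thus False using cim cg by linarith
    qed
    then obtain z where "z \<in> D" "L (\<phi> w) z" "z \<notin> \<phi> ` U'" by blast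
    moreover have "\<forall>w'. {u,w'}\<in>EF \<longrightarrow> w' = w" using lf w by blast
    ultimately show ?thesis using that by blast
  next
    case False
    obtain y where "y \<in> D" using \<open>D \<noteq> {}\<close> by blast
    hence cg: "card {z\<in>D. L y z} \<ge> Suc m" using Suc.prems(4) Suc.hyps(2) by simp
    moreover have "card {z\<in>D. L y z} \<le> card D" using \<open>finite D\<close> by (intro card_mono) auto
    have "\<not> D \<subseteq> \<phi> ` U'"
    proof
      assume "D \<subseteq> \<phi> ` U'"
      hence "card D \<le> card (\<phi> ` U')" using fim card_mono by blast
      thus False using cim cg \<open>card {z\<in>D. L y z} \<le> card D\<close> by linarith
    qed
    thus ?thesis using that False by blast
  qed
  define \<psi> where "\<psi> = \<phi>(u := z)"
  have U: "U = insert u U'" using uU U'_def by auto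
  have "inj_on \<psi> U" unfolding U \<psi>_def using ph(1) z(2) U'_def
    by (auto simp: inj_on_def)
  moreover have "\<psi> ` U \<subseteq> D" unfolding U \<psi>_def using ph(2) z(1) U'_def by auto
  moreover have "\<forall>a b. {a,b}\<in>EF \<longrightarrow> L (\<psi> a) (\<psi> b)"
  proof (intro allI impI)
    fix a b assume ab: "{a,b}\<in>EF"
    have "card {a,b} = 2" using ab Suc.prems(2) by blast
    hence anb: "a \<noteq> b" using card2_neq by metis
    show "L (\<psi> a) (\<psi> b)"
    proof (cases "u \<in> {a,b}")
      case False
      hence "{a,b}\<in>EF'" using ab by (simp add: EF'_def)
      thus ?thesis using ph(3) False by (auto simp: \<psi>_def)
    next
      case True
      show ?thesis
      proof (cases "a = u")
        case True
        hence "{u,b}\<in>EF" using ab by simp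
        hence "L (\<phi> b) z" using z(3) by blast
        thus ?thesis using True anb sym by (simp add: \<psi>_def)
      next
        case False
        hence "b = u" using \<open>u \<in> {a,b}\<close> by simp
        hence "{u,a}\<in>EF" using ab by (simp add: insert_commute)
        hence "L (\<phi> a) z" using z(3) by blast
        thus ?thesis using False \<open>b = u\<close> by (simp add: \<psi>_def)
      qed
    qed
  qed
  ultimately show ?case by blast
qed

lemma peel:
  assumes "finite W" and sym: "\<forall>y z. L y z \<longrightarrow> L z y"
    and "(\<Sum>y\<in>W. card {z\<in>W. L y z}) > 2 * d * card W"
  shows "\<exists>D\<subseteq>W. D \<noteq> {} \<and> (\<forall>y\<in>D. card {z\<in>D. L y z} > d)"
  using assms(1,3)
proof (induction "card W" arbitrary: W)
  case 0
  thus ?case by simp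
next
  case (Suc m)
  show ?case
  proof (cases "\<forall>y\<in>W. card {z\<in>W. L y z} > d")
    case True
    have "W \<noteq> {}" using Suc.hyps(2) by auto
    thus ?thesis using True by blast
  next
    case False
    then obtain y where y: "y \<in> W" "card {z\<in>W. L y z} \<le> d" by (auto simp: not_less)
    define W' where "W' = W - {y}"
    have fW': "finite W'" using Suc.prems(1) by (simp add: W'_def)
    have cW': "m = card W'" using Suc.hyps(2) y(1) Suc.prems(1) by (simp add: W'_def)
    have W: "W = insert y W'" using y(1) W'_def by auto
    have yW': "y \<notin> W'" by (simp add: W'_def)
    have s1: "(\<Sum>y\<in>W. card {z\<in>W. L y z}) = card {z\<in>W. L y z} + (\<Sum>a\<in>W'. card {z\<in>W. L a z})"
      by (subst W) (simp add: fW' yW')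
    have le1: "card {z\<in>W. L a z} \<le> card {z\<in>W'. L a z} + (if L a y then 1 else 0)" for a
    proof -
      have "{z\<in>W. L a z} \<subseteq> (if L a y then insert y {z\<in>W'. L a z} else {z\<in>W'. L a z})"
        using W by auto
      hence "card {z\<in>W. L a z} \<le> card (if L a y then insert y {z\<in>W'. L a z} else {z\<in>W'. L a z})"
        using fW' by (intro card_mono) auto
      also have "\<dots> \<le> card {z\<in>W'. L a z} + (if L a y then 1 else 0)"
        using fW' by (auto intro: card_insert_le_m1 simp: card_insert_if)
      finally show ?thesis .
    qed
    have "(\<Sum>a\<in>W'. card {z\<in>W. L a z}) \<le> (\<Sum>a\<in>W'. card {z\<in>W'. L a z} + (if L a y then 1 else 0))"
      by (rule sum_mono) (rule le1)
    also have "\<dots> = (\<Sum>a\<in>W'. card {z\<in>W'. L a z}) + card {a\<in>W'. L a y}"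
      using fW' by (simp add: sum.distrib sum.inter_filter[symmetric])
    also have "card {a\<in>W'. L a y} \<le> card {z\<in>W. L y z}"
      using Suc.prems(1) sym W by (intro card_mono) auto
    finally have "(\<Sum>y\<in>W. card {z\<in>W. L y z}) \<le> (\<Sum>a\<in>W'. card {z\<in>W'. L a z}) + 2 * d"
      using s1 y(2) by linarith
    moreover have "card W = Suc (card W')" using cW' Suc.hyps(2) by simp
    ultimately have "(\<Sum>a\<in>W'. card {z\<in>W'. L a z}) > 2 * d * card W'" using Suc.prems(2)
      by (simp add: algebra_simps)
    then obtain D where "D \<subseteq> W'" "D \<noteq> {}" "\<forall>y\<in>D. card {z\<in>D. L y z} > d"
      using Suc.hyps(1)[OF cW' fW'] by blast
    thus ?thesis using W'_def by blast
  qed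
qed

lemma card_colours:
  assumes "finite A" and "\<forall>z\<in>A. g z < (k::nat)"
  shows "card A = (\<Sum>i<k. card {z\<in>A. g z = i})"
  using assms
proof (induction A rule: finite_induct)
  case empty thus ?case by simp
next
  case (insert a A)
  have "(\<Sum>i<k. card {z\<in>insert a A. g z = i}) = (\<Sum>i<k. card {z\<in>A. g z = i} + (if g a = i then 1 else 0))"
  proof (intro sum.cong refl)
    fix i
    have "{z\<in>insert a A. g z = i} = (if g a = i then insert a {z\<in>A. g z = i} else {z\<in>A. g z = i})" by auto
    thus "card {z\<in>insert a A. g z = i} = card {z\<in>A. g z = i} + (if g a = i then 1 else 0)"
      using insert.hyps by simp
  qed
  also have "\<dots> = (\<Sum>i<k. card {z\<in>A. g z = i}) + 1"
    using insert.prems by (simp add: sum.distrib)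
  finally show ?case using insert by simp
qed



lemma hyp_props:
  fixes y z n r :: nat
  assumes "r \<ge> 3" "y \<in> {r-2..<n}" "z \<in> {r-2..<n}" "y \<noteq> z"
  shows "insert y (insert z {..<r-2}) \<subseteq> {..<n}" "card (insert y (insert z {..<r-2})) = r"
  using assms by auto

lemma union_cancel:
  fixes X Y :: "nat set"
  assumes "T \<union> X = T \<union> Y" "X \<inter> T = {}" "Y \<inter> T = {}"
  shows "X = Y"
  using assms by blast

theorem corollary3:
  fixes V :: "'a set" and E :: "'a set set" and v :: 'a and k r :: nat
  assumes "simple_graph V E"
    and "v \<in> V"
    and "acyclic_graph (del_vertex_V V v) (del_vertex_E E v)"
    and "k \<ge> 2" and "r \<ge> 3"
  shows "berge_ramsey r V E k \<le> 4 * k * card V + r - 2"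
proof -
  define N where "N = card V"
  have finV: "finite V" and Eprop: "\<forall>e\<in>E. e \<subseteq> V \<and> card e = 2"
    using assms(1) by (auto simp: simple_graph_def)
  have N1: "N \<ge> 1" using finV assms(2) N_def by (metis One_nat_def Suc_leI card_gt_0_iff empty_iff)
  define n where "n = 4 * k * N + r - 2"
  define T where "T = {..<r-2}"
  define W where "W = {r-2..<n}"
  define hyp where "hyp = (\<lambda>y z::nat. insert y (insert z T))"
  have cW: "card W = 4 * k * N" using assms(5) by (simp add: W_def n_def)
  have WT: "W \<inter> T = {}" by (auto simp: W_def T_def)
  have hyp_sym: "hyp y z = hyp z y" for y z by (simp add: hyp_def insert_commute)
  have hypP: "y \<in> W \<Longrightarrow> z \<in> W \<Longrightarrow> y \<noteq> z \<Longrightarrow> hyp y z \<subseteq> {..<n} \<and> card (hyp y z) = r" for y z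
    using hyp_props[OF assms(5)] by (simp add: hyp_def T_def W_def)
  have "berge_arrows r k V E n"
    unfolding berge_arrows_def
  proof (intro allI impI)
    fix c :: "nat set \<Rightarrow> nat"
    assume hc: "\<forall>e. e \<subseteq> {..<n} \<and> card e = r \<longrightarrow> c e < k"
    define L where "L = (\<lambda>i y z. y \<noteq> z \<and> c (hyp y z) = i)"
    have Lsym: "\<forall>y z. L i y z \<longrightarrow> L i z y" for i by (auto simp: L_def hyp_sym)
    have deg: "card W - 1 = (\<Sum>i<k. card {z\<in>W. L i y z})" if yW: "y \<in> W" for y
    proof -
      have "card {z\<in>W. z \<noteq> y} = (\<Sum>i<k. card {z\<in>{z\<in>W. z \<noteq> y}. c (hyp y z) = i})"
        by (rule card_colours) (use hc hypP yW in \<open>auto simp: W_def\<close>)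
      moreover have "{z\<in>W. z \<noteq> y} = W - {y}" by auto
      moreover have "{z\<in>{z\<in>W. z \<noteq> y}. c (hyp y z) = i} = {z\<in>W. L i y z}" for i
        by (auto simp: L_def)
      ultimately show ?thesis using yW by (simp add: W_def)
    qed
    have total: "(\<Sum>i<k. \<Sum>y\<in>W. card {z\<in>W. L i y z}) = card W * (card W - 1)"
    proof -
      have "(\<Sum>i<k. \<Sum>y\<in>W. card {z\<in>W. L i y z}) = (\<Sum>y\<in>W. \<Sum>i<k. card {z\<in>W. L i y z})"
        by (rule sum.swap)
      also have "\<dots> = (\<Sum>y\<in>W. card W - 1)" using deg by simp
      finally show ?thesis by simp
    qed
    obtain i where ik: "i < k" and big: "(\<Sum>y\<in>W. card {z\<in>W. L i y z}) > 2 * N * card W"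
    proof (rule ccontr)
      assume "\<not> thesis"
      hence "\<forall>i\<in>{..<k}. (\<Sum>y\<in>W. card {z\<in>W. L i y z}) \<le> 2 * N * card W" using that by force
      hence "(\<Sum>i<k. \<Sum>y\<in>W. card {z\<in>W. L i y z}) \<le> card {..<k} * (2 * N * card W)"
        using sum_bounded_above[of "{..<k}" "\<lambda>i. \<Sum>y\<in>W. card {z\<in>W. L i y z}" "2 * N * card W"] by simp
      hence "card W * (card W - 1) \<le> card W * (2 * k * N)" using total by (simp add: algebra_simps)
      moreover have "card W > 0" using cW N1 assms(4) by simp
      ultimately have "card W - 1 \<le> 2 * k * N" by simp
      moreover have kN: "k * N \<ge> 1" using N1 assms(4) by (metis le_trans mult_le_mono one_le_numeral mult_1)
      moreover have "4*k*N = 4*(k*N)" "2*k*N = 2*(k*N)" by simp_all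
      ultimately show False using cW by linarith
    qed
    obtain D where D: "D \<subseteq> W" "D \<noteq> {}" "\<forall>y\<in>D. card {z\<in>D. L i y z} > N"
      using peel[of W "L i" N] big Lsym by (auto simp: W_def)
    have finD: "finite D" using D(1) finite_subset by (auto simp: W_def)
    define U where "U = V - {v}"
    define EF where "EF = del_vertex_E E v"
    have cU: "card U = N - 1" using finV assms(2) by (simp add: U_def N_def)
    have EFp: "\<forall>e\<in>EF. e \<subseteq> U \<and> card e = 2" using Eprop by (auto simp: EF_def U_def del_vertex_E_def)
    have ncU: "\<not> has_cycle U EF" using assms(3)
      by (simp add: acyclic_graph_def U_def EF_def del_vertex_V_def)
    have dgU: "\<forall>y\<in>D. card {z\<in>D. L i y z} \<ge> card U" using D(3) cU by force
    obtain \<phi> where ph: "inj_on \<phi> U" "\<phi> ` U \<subseteq> D" "\<forall>a b. {a,b}\<in>EF \<longrightarrow> L i (\<phi> a) (\<phi> b)"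
      using embed_forest[OF _ EFp ncU finD D(2) dgU Lsym] finV U_def by blast
    have imU: "\<phi> ` U \<subseteq> W" using ph(2) D(1) by blast
    have cim: "card (\<phi> ` U) < N" using cU N1 finV card_image_le[of U \<phi>] U_def by simp
    have exw: "\<exists>w. w \<in> D \<and> w \<notin> \<phi> ` U \<and> L i (\<phi> u) w" if uU: "u \<in> U" for u
    proof -
      have "\<phi> u \<in> D" using uU ph(2) by auto
      hence cg: "card {z\<in>D. L i (\<phi> u) z} > N" using D(3) by blast
      have "\<not> {z\<in>D. L i (\<phi> u) z} \<subseteq> \<phi> ` U"
      proof
        assume "{z\<in>D. L i (\<phi> u) z} \<subseteq> \<phi> ` U"
        moreover have "finite (\<phi> ` U)" using finV U_def by simp
        ultimately have "card {z\<in>D. L i (\<phi> u) z} \<le> card (\<phi> ` U)" by (simp add: card_mono)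
        thus False using cg cim by linarith
      qed
      thus ?thesis by blast
    qed
    define w where "w = (\<lambda>u. SOME w. w \<in> D \<and> w \<notin> \<phi> ` U \<and> L i (\<phi> u) w)"
    have wp: "w u \<in> D \<and> w u \<notin> \<phi> ` U \<and> L i (\<phi> u) (w u)" if "u \<in> U" for u
      unfolding w_def using someI_ex[OF exw[OF that]] .
    define uo where "uo = (\<lambda>e. SOME u. u \<in> e \<and> u \<noteq> v)"
    have vedge: "e = {v, uo e} \<and> uo e \<in> U" if ee: "e \<in> E" and ve: "v \<in> e" for e
    proof -
      obtain a b where ab: "e = {a,b}" "a \<noteq> b" using Eprop ee card_2_iff by metis
      obtain u where u: "e = {v,u}" "u \<noteq> v" using ab ve by auto
      have "\<exists>u. u \<in> e \<and> u \<noteq> v" using u by auto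
      hence uo: "uo e \<in> e \<and> uo e \<noteq> v" unfolding uo_def by (rule someI_ex)
      hence "uo e = u" using u by auto
      moreover have "u \<in> U" using u Eprop ee by (auto simp: U_def)
      ultimately show ?thesis using u by simp
    qed
    have nvedge: "\<exists>a b. e = {a,b} \<and> a \<noteq> b \<and> a \<in> U \<and> b \<in> U \<and> e \<in> EF" if ee: "e \<in> E" and ve: "v \<notin> e" for e
    proof -
      obtain a b where ab: "e = {a,b}" "a \<noteq> b" using Eprop ee card_2_iff by metis
      moreover have "a \<in> V" "b \<in> V" using Eprop ee ab by auto
      ultimately show ?thesis using ee ve
        by (intro exI[of _ a] exI[of _ b]) (auto simp: U_def EF_def del_vertex_E_def)
    qed
    define \<Phi> where "\<Phi> = (\<lambda>a. if a = v then r - 3 else \<phi> a)"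
    define f where "f = (\<lambda>e. if v \<in> e then hyp (\<phi> (uo e)) (w (uo e)) else T \<union> \<phi> ` e)"
    have rW: "r - 3 \<notin> W" "r - 3 \<in> T" using assms(5) by (auto simp: W_def T_def)
    have F1: "inj_on \<Phi> V"
    proof (rule inj_onI)
      fix a b assume "a \<in> V" "b \<in> V" "\<Phi> a = \<Phi> b"
      thus "a = b" using ph(1) imU rW unfolding \<Phi>_def U_def
        by (auto split: if_splits simp: inj_on_def)
    qed
    have F2: "\<Phi> ` V \<subseteq> {..<n}"
      using imU assms(5) N1 assms(4) unfolding \<Phi>_def U_def W_def n_def by auto
    have F3: "inj_on f E"
    proof (rule inj_onI)
      fix e1 e2 assume e1: "e1 \<in> E" and e2: "e2 \<in> E" and fe: "f e1 = f e2"
      show "e1 = e2"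
      proof (cases "v \<in> e1")
        case True
        note v1 = vedge[OF e1 True]
        have w1: "w (uo e1) \<notin> \<phi> ` U" "\<phi> (uo e1) \<in> W" "w (uo e1) \<in> W" using wp[of "uo e1"] v1 imU D(1) by auto
        show ?thesis
        proof (cases "v \<in> e2")
          case True
          note v2 = vedge[OF e2 True]
          have w2: "w (uo e2) \<notin> \<phi> ` U" "\<phi> (uo e2) \<in> W" "w (uo e2) \<in> W" using wp[of "uo e2"] v2 imU D(1) by auto
          have "T \<union> {\<phi> (uo e1), w (uo e1)} = T \<union> {\<phi> (uo e2), w (uo e2)}"
            using fe \<open>v \<in> e1\<close> True by (simp add: f_def hyp_def)
          hence "{\<phi> (uo e1), w (uo e1)} = {\<phi> (uo e2), w (uo e2)}"
            by (rule union_cancel) (use w1 w2 WT in auto)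
          hence "\<phi> (uo e1) = \<phi> (uo e2)" using w1 w2 v1 v2 by (metis doubleton_eq_iff image_eqI)
          hence "uo e1 = uo e2" using ph(1) v1 v2 by (meson inj_onD)
          thus ?thesis using v1 v2 by metis
        next
          case False
          obtain a b where ab: "e2 = {a,b}" "a \<in> U" "b \<in> U" using nvedge[OF e2 False] by blast
          have "T \<union> {\<phi> (uo e1), w (uo e1)} = T \<union> \<phi> ` e2"
            using fe \<open>v \<in> e1\<close> False by (simp add: f_def hyp_def)
          hence "{\<phi> (uo e1), w (uo e1)} = \<phi> ` e2"
            by (rule union_cancel) (use w1 imU ab WT in auto)
          hence "w (uo e1) \<in> \<phi> ` U" using ab by auto
          thus ?thesis using w1 by blast
        qed
      next
        case False
        obtain a b where ab: "e1 = {a,b}" "a \<in> U" "b \<in> U" using nvedge[OF e1 False] by blast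
        show ?thesis
        proof (cases "v \<in> e2")
          case True
          note v2 = vedge[OF e2 True]
          have w2: "w (uo e2) \<notin> \<phi> ` U" "\<phi> (uo e2) \<in> W" "w (uo e2) \<in> W" using wp[of "uo e2"] v2 imU D(1) by auto
          have "T \<union> \<phi> ` e1 = T \<union> {\<phi> (uo e2), w (uo e2)}"
            using fe \<open>v \<notin> e1\<close> True by (simp add: f_def hyp_def)
          hence "\<phi> ` e1 = {\<phi> (uo e2), w (uo e2)}"
            by (rule union_cancel) (use w2 imU ab WT in auto)
          hence "w (uo e2) \<in> \<phi> ` U" using ab by auto
          thus ?thesis using w2 by blast
        next
          case False
          obtain a' b' where ab': "e2 = {a',b'}" "a' \<in> U" "b' \<in> U" using nvedge[OF e2 False] by blast
          have "T \<union> \<phi> ` e1 = T \<union> \<phi> ` e2"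
            using fe \<open>v \<notin> e1\<close> False by (simp add: f_def)
          hence "\<phi> ` e1 = \<phi> ` e2"
            by (rule union_cancel) (use imU ab ab' WT in auto)
          moreover have "e1 \<subseteq> U" "e2 \<subseteq> U" using ab ab' by auto
          ultimately show ?thesis using inj_on_image_eq_iff[OF ph(1)] by simp
        qed
      qed
    qed
    have F4: "f ` E \<subseteq> {e. e \<subseteq> {..<n} \<and> card e = r \<and> c e = i}"
    proof
      fix h assume "h \<in> f ` E"
      then obtain e where e: "e \<in> E" "h = f e" by blast
      show "h \<in> {e. e \<subseteq> {..<n} \<and> card e = r \<and> c e = i}"
      proof (cases "v \<in> e")
        case True
        note v1 = vedge[OF e(1) True]
        have w1: "w (uo e) \<notin> \<phi> ` U" "\<phi> (uo e) \<in> W" "w (uo e) \<in> W" "L i (\<phi> (uo e)) (w (uo e))"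
          using wp[of "uo e"] v1 imU D(1) by auto
        have "h = hyp (\<phi> (uo e)) (w (uo e))" using e True by (simp add: f_def)
        thus ?thesis using hypP[OF w1(2,3)] w1(4) by (auto simp: L_def)
      next
        case False
        obtain a b where ab: "e = {a,b}" "a \<noteq> b" "a \<in> U" "b \<in> U" "e \<in> EF" using nvedge[OF e(1) False] by blast
        have L: "L i (\<phi> a) (\<phi> b)" using ph(3) ab by blast
        have "h = hyp (\<phi> a) (\<phi> b)" using e False ab by (auto simp: f_def hyp_def)
        moreover have "\<phi> a \<in> W" "\<phi> b \<in> W" using ab imU by auto
        ultimately show ?thesis using hypP L by (auto simp: L_def)
      qed
    qed
    have F5: "\<forall>e\<in>E. \<Phi> ` e \<subseteq> f e"
    proof
      fix e assume e: "e \<in> E"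
      show "\<Phi> ` e \<subseteq> f e"
      proof (cases "v \<in> e")
        case True
        note v1 = vedge[OF e True]
        have "uo e \<noteq> v" using v1 U_def by auto
        hence "\<Phi> ` e = {r - 3, \<phi> (uo e)}" using v1 by (subst v1) (auto simp: \<Phi>_def)
        thus ?thesis using True rW by (auto simp: f_def hyp_def)
      next
        case False
        hence "\<Phi> ` e = \<phi> ` e" by (auto simp: \<Phi>_def)
        thus ?thesis using False by (auto simp: f_def)
      qed
    qed
    have "contains_berge V E {..<n} {e. e \<subseteq> {..<n} \<and> card e = r \<and> c e = i}"
      unfolding contains_berge_def by (intro exI[of _ \<Phi>] exI[of _ f] conjI F1 F2 F3 F4 F5)
    thus "\<exists>i<k. contains_berge V E {..<n} {e. e \<subseteq> {..<n} \<and> card e = r \<and> c e = i}"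
      using ik by blast
  qed
  thus ?thesis unfolding berge_ramsey_def n_def N_def by (rule Least_le)
qed

end
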